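(* Suppose a total preorder $\succeq$ on $\mathcal{Q}_b$ is continuous (with respect to uniform convergence), monotonic, and satisfies the dual independence axiom. Then there exists a continuous linear functional on the Banach space $B((0,1],\Sigma)$ whose restriction to $\mathcal{Q}_b$ is a numerical representation of $\succeq$.
   Context: $\mathcal{Q}_b$ is the set of bounded, nondecreasing, left-continuous functions on $(0,1]$. $\Sigma$ is the algebra of subsets of $(0,1]$ generated by finite unions and intersections of intervals $(a,b]$ with $0<a<b\le1$. A simple function is $\sum_{i=1}^n\alpha_i\mathbf{1}_{A_i}$ with $\alpha_i\in\mathbb{R}$ and disjoint $A_i\in\Sigma$. $B((0,1],\Sigma)$ is the space of bounded functions on $(0,1]$ that are uniform limits of simple functions, with norm $\|\Phi\|=\sup_{0<p\le1}|\Phi(p)|$; it contains $\mathcal{Q}_b$. A total preorder is reflexive, transitive, complete; $\sim,\succ$ are its indifference and strict parts; continuous means the sets $\{\Psi:\Psi\succeq\Phi\}$ and $\{\Psi:\Phi\succeq\Psi\}$ are closed for each $\Phi$. Monotonic: $\Phi(p)\ge\Psi(p)$ for all $p$ implies $\Phi\succeq\Psi$. Dual independence axiom: $\Phi\succ\Psi$ implies $\alpha\Phi+(1-\alpha)\Upsilon\succ\alpha\Psi+(1-\alpha)\Upsilon$ for all $\Upsilon\in\mathcal{Q}_b$, $\alpha\in(0,1)$. $U$ is a numerical representation if $\Phi\succ\Psi\iff U(\Phi)>U(\Psi)$. *)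

theory Defs
  imports "HOL-Analysis.Analysis"
begin

text \<open>Functions on (0,1] are represented as functions real => real that vanish
  outside (0,1].\<close>

definition unit_ioc :: "real set" where
  "unit_ioc = {0<..1}"

definition sup_norm :: "(real \<Rightarrow> real) \<Rightarrow> real" where
  "sup_norm \<Phi> = (SUP p\<in>unit_ioc. \<bar>\<Phi> p\<bar>)"

definition Qb :: "(real \<Rightarrow> real) set" where
  "Qb = {\<Phi>. (\<forall>p. p \<notin> unit_ioc \<longrightarrow> \<Phi> p = 0)
            \<and> (\<exists>M. \<forall>p\<in>unit_ioc. \<bar>\<Phi> p\<bar> \<le> M)
            \<and> mono_on unit_ioc \<Phi>
            \<and> (\<forall>p\<in>unit_ioc. continuous (at_left p) \<Phi>)}"

definition Sigma_alg :: "real set set" where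
  "Sigma_alg = \<Inter>{M. algebra unit_ioc M \<and>
                      {{a<..b} | a b. 0 < a \<and> a < b \<and> b \<le> 1} \<subseteq> M}"

definition simple_fun :: "(real \<Rightarrow> real) \<Rightarrow> bool" where
  "simple_fun \<Phi> \<longleftrightarrow> (\<exists>(n::nat) (\<alpha>::nat \<Rightarrow> real) (A::nat \<Rightarrow> real set).
      (\<forall>i<n. A i \<in> Sigma_alg) \<and>
      (\<forall>i<n. \<forall>j<n. i \<noteq> j \<longrightarrow> A i \<inter> A j = {}) \<and>
      \<Phi> = (\<lambda>p. \<Sum>i<n. \<alpha> i * indicator (A i) p))"

definition Bspace :: "(real \<Rightarrow> real) set" where
  "Bspace = {\<Phi>. (\<forall>p. p \<notin> unit_ioc \<longrightarrow> \<Phi> p = 0)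
            \<and> (\<exists>M. \<forall>p\<in>unit_ioc. \<bar>\<Phi> p\<bar> \<le> M)
            \<and> (\<forall>\<epsilon>>0. \<exists>s. simple_fun s \<and> (\<forall>p\<in>unit_ioc. \<bar>\<Phi> p - s p\<bar> < \<epsilon>))}"

definition total_preorder_on :: "'a set \<Rightarrow> ('a \<Rightarrow> 'a \<Rightarrow> bool) \<Rightarrow> bool" where
  "total_preorder_on S R \<longleftrightarrow>
     (\<forall>x\<in>S. R x x) \<and>
     (\<forall>x\<in>S. \<forall>y\<in>S. \<forall>z\<in>S. R x y \<longrightarrow> R y z \<longrightarrow> R x z) \<and>
     (\<forall>x\<in>S. \<forall>y\<in>S. R x y \<or> R y x)"

definition strict_part :: "('a \<Rightarrow> 'a \<Rightarrow> bool) \<Rightarrow> 'a \<Rightarrow> 'a \<Rightarrow> bool" where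
  "strict_part R x y \<longleftrightarrow> R x y \<and> \<not> R y x"

definition uclosed_in_Qb :: "(real \<Rightarrow> real) set \<Rightarrow> bool" where
  "uclosed_in_Qb T \<longleftrightarrow> (\<forall>\<Psi>\<in>Qb. (\<forall>\<epsilon>>0. \<exists>\<Psi>'\<in>T. sup_norm (\<lambda>p. \<Psi>' p - \<Psi> p) < \<epsilon>) \<longrightarrow> \<Psi> \<in> T)"

definition continuous_pref :: "((real \<Rightarrow> real) \<Rightarrow> (real \<Rightarrow> real) \<Rightarrow> bool) \<Rightarrow> bool" where
  "continuous_pref R \<longleftrightarrow> (\<forall>\<Phi>\<in>Qb.
      uclosed_in_Qb {\<Psi>\<in>Qb. R \<Psi> \<Phi>} \<and> uclosed_in_Qb {\<Psi>\<in>Qb. R \<Phi> \<Psi>})"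

definition monotonic_pref :: "((real \<Rightarrow> real) \<Rightarrow> (real \<Rightarrow> real) \<Rightarrow> bool) \<Rightarrow> bool" where
  "monotonic_pref R \<longleftrightarrow> (\<forall>\<Phi>\<in>Qb. \<forall>\<Psi>\<in>Qb. (\<forall>p\<in>unit_ioc. \<Phi> p \<ge> \<Psi> p) \<longrightarrow> R \<Phi> \<Psi>)"

definition dual_independence :: "((real \<Rightarrow> real) \<Rightarrow> (real \<Rightarrow> real) \<Rightarrow> bool) \<Rightarrow> bool" where
  "dual_independence R \<longleftrightarrow> (\<forall>\<Phi>\<in>Qb. \<forall>\<Psi>\<in>Qb. \<forall>\<Upsilon>\<in>Qb. \<forall>\<alpha>::real. 0 < \<alpha> \<and> \<alpha> < 1 \<longrightarrow>
      strict_part R \<Phi> \<Psi> \<longrightarrow>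
      strict_part R (\<lambda>p. \<alpha> * \<Phi> p + (1 - \<alpha>) * \<Upsilon> p) (\<lambda>p. \<alpha> * \<Psi> p + (1 - \<alpha>) * \<Upsilon> p))"

definition numerical_representation ::
  "((real \<Rightarrow> real) \<Rightarrow> (real \<Rightarrow> real) \<Rightarrow> bool) \<Rightarrow> ((real \<Rightarrow> real) \<Rightarrow> real) \<Rightarrow> bool" where
  "numerical_representation R U \<longleftrightarrow>
     (\<forall>\<Phi>\<in>Qb. \<forall>\<Psi>\<in>Qb. strict_part R \<Phi> \<Psi> \<longleftrightarrow> U \<Phi> > U \<Psi>)"

definition continuous_linear_functional_on_B :: "((real \<Rightarrow> real) \<Rightarrow> real) \<Rightarrow> bool" where
  "continuous_linear_functional_on_B L \<longleftrightarrow>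
     (\<forall>\<Phi>\<in>Bspace. \<forall>\<Psi>\<in>Bspace. L (\<lambda>p. \<Phi> p + \<Psi> p) = L \<Phi> + L \<Psi>) \<and>
     (\<forall>\<Phi>\<in>Bspace. \<forall>c::real. L (\<lambda>p. c * \<Phi> p) = c * L \<Phi>) \<and>
     (\<forall>\<Phi>\<in>Bspace. \<forall>\<epsilon>>0. \<exists>\<delta>>0. \<forall>\<Psi>\<in>Bspace.
        sup_norm (\<lambda>p. \<Psi> p - \<Phi> p) < \<delta> \<longrightarrow> \<bar>L \<Psi> - L \<Phi>\<bar> < \<epsilon>)"

end

theory Submission
  imports Defs
begin


definition K :: "real \<Rightarrow> real \<Rightarrow> real" where
  "K c = (\<lambda>p. if p \<in> unit_ioc then c else 0)"

lemma unit_ioc_ne: "unit_ioc \<noteq> {}"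
  unfolding unit_ioc_def by auto

lemma one_in: "1 \<in> unit_ioc" unfolding unit_ioc_def by auto

lemma SN1: assumes "\<forall>p\<in>unit_ioc. \<bar>f p\<bar> \<le> e" shows "sup_norm f \<le> e"
  unfolding sup_norm_def using assms unit_ioc_ne by (intro cSUP_least) auto

lemma SN2: assumes "\<forall>p\<in>unit_ioc. \<bar>f p\<bar> \<le> M" "p \<in> unit_ioc" shows "\<bar>f p\<bar> \<le> sup_norm f"
  unfolding sup_norm_def using assms
  by (intro cSUP_upper) (auto intro!: bdd_aboveI2[where M=M])

lemma left_cont_ev: "eventually (\<lambda>x. f x = f p) (at_left p) \<Longrightarrow> continuous (at_left p) f"
  by (simp add: continuous_within tendsto_eventually)

lemma QbI:
  assumes "\<And>p. p \<notin> unit_ioc \<Longrightarrow> f p = 0" "\<And>p. p\<in>unit_ioc \<Longrightarrow> \<bar>f p\<bar> \<le> M"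
    "\<And>x y. x \<in> unit_ioc \<Longrightarrow> y \<in> unit_ioc \<Longrightarrow> x \<le> y \<Longrightarrow> f x \<le> f y"
    "\<And>p. p\<in>unit_ioc \<Longrightarrow> continuous (at_left p) f"
  shows "f \<in> Qb"
  unfolding Qb_def using assms by (auto intro!: mono_onI)

lemma QbD:
  assumes "f \<in> Qb"
  shows "\<And>p. p \<notin> unit_ioc \<Longrightarrow> f p = 0" "\<exists>M. \<forall>p\<in>unit_ioc. \<bar>f p\<bar> \<le> M"
    "\<And>x y. x \<in> unit_ioc \<Longrightarrow> y \<in> unit_ioc \<Longrightarrow> x \<le> y \<Longrightarrow> f x \<le> f y"
    "\<And>p. p\<in>unit_ioc \<Longrightarrow> continuous (at_left p) f"
  using assms unfolding Qb_def by (auto dest: mono_onD)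

lemma ev_left_ioc: "p \<in> unit_ioc \<Longrightarrow> eventually (\<lambda>x. x \<in> unit_ioc) (at_left p)"
proof -
  assume p: "p \<in> unit_ioc"
  then have "0 < p" "p \<le> 1" unfolding unit_ioc_def by auto
  then have "eventually (\<lambda>x. x \<in> {0<..<p}) (at_left p)" by (intro eventually_at_left_real)
  then show ?thesis by eventually_elim (use \<open>p \<le> 1\<close> in \<open>auto simp: unit_ioc_def\<close>)
qed

lemma K_Qb: "K c \<in> Qb"
proof (rule QbI[where M="\<bar>c\<bar>"])
  fix p assume p: "p \<in> unit_ioc"
  have "eventually (\<lambda>x. x \<in> unit_ioc) (at_left p)" using ev_left_ioc[OF p] .
  then have "eventually (\<lambda>x. K c x = K c p) (at_left p)"
    by eventually_elim (use p in \<open>auto simp: K_def\<close>)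
  then show "continuous (at_left p) (K c)" by (rule left_cont_ev)
qed (auto simp: K_def)

lemma K0: "K 0 = (\<lambda>p. 0)" by (auto simp: K_def)

lemma Qb_lin:
  assumes "\<Phi> \<in> Qb" "\<Psi> \<in> Qb" "a \<ge> 0" "b \<ge> 0"
  shows "(\<lambda>p. a * \<Phi> p + b * \<Psi> p) \<in> Qb"
proof -
  obtain M1 where M1: "\<forall>p\<in>unit_ioc. \<bar>\<Phi> p\<bar> \<le> M1" using QbD(2)[OF assms(1)] by blast
  obtain M2 where M2: "\<forall>p\<in>unit_ioc. \<bar>\<Psi> p\<bar> \<le> M2" using QbD(2)[OF assms(2)] by blast
  show ?thesis
  proof (rule QbI[where M="a*M1+b*M2"])
    fix p assume p: "p \<in> unit_ioc"
    have "\<bar>a * \<Phi> p + b * \<Psi> p\<bar> \<le> a * \<bar>\<Phi> p\<bar> + b * \<bar>\<Psi> p\<bar>"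
      using assms by (simp add: abs_triangle_ineq[THEN order_trans] abs_mult)
    also have "\<dots> \<le> a*M1+b*M2" using M1 M2 p assms
      by (intro add_mono mult_left_mono) auto
    finally show "\<bar>a * \<Phi> p + b * \<Psi> p\<bar> \<le> a*M1+b*M2" .
    show "continuous (at_left p) (\<lambda>p. a * \<Phi> p + b * \<Psi> p)"
      using QbD(4)[OF assms(1) p] QbD(4)[OF assms(2) p] by (intro continuous_intros)
  next
    fix x y assume "x \<in> unit_ioc" "y \<in> unit_ioc" "x \<le> y"
    then show "a * \<Phi> x + b * \<Psi> x \<le> a * \<Phi> y + b * \<Psi> y"
      using QbD(3)[OF assms(1)] QbD(3)[OF assms(2)] assms
      by (intro add_mono mult_left_mono) auto
  qed (use QbD(1)[OF assms(1)] QbD(1)[OF assms(2)] in auto)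
qed

lemma Qb_add: "\<Phi> \<in> Qb \<Longrightarrow> \<Psi> \<in> Qb \<Longrightarrow> (\<lambda>p. \<Phi> p + \<Psi> p) \<in> Qb"
  using Qb_lin[of \<Phi> \<Psi> 1 1] by simp

lemma Qb_scale: "\<Phi> \<in> Qb \<Longrightarrow> a \<ge> 0 \<Longrightarrow> (\<lambda>p. a * \<Phi> p) \<in> Qb"
  using Qb_lin[of \<Phi> "K 0" a 0] K_Qb[of 0] by (simp add: K0)

lemma Qb_mix: "\<Phi> \<in> Qb \<Longrightarrow> \<Psi> \<in> Qb \<Longrightarrow> 0 \<le> a \<Longrightarrow> a \<le> 1 \<Longrightarrow> (\<lambda>p. a * \<Phi> p + (1-a) * \<Psi> p) \<in> Qb"
  by (rule Qb_lin) auto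

lemma Qb_mult:
  assumes "\<Phi> \<in> Qb" "\<Psi> \<in> Qb" "\<forall>p\<in>unit_ioc. \<Phi> p \<ge> 0" "\<forall>p\<in>unit_ioc. \<Psi> p \<ge> 0"
  shows "(\<lambda>p. \<Phi> p * \<Psi> p) \<in> Qb"
proof -
  obtain M1 where M1: "\<forall>p\<in>unit_ioc. \<bar>\<Phi> p\<bar> \<le> M1" using QbD(2)[OF assms(1)] by blast
  obtain M2 where M2: "\<forall>p\<in>unit_ioc. \<bar>\<Psi> p\<bar> \<le> M2" using QbD(2)[OF assms(2)] by blast
  show ?thesis
  proof (rule QbI[where M="M1*M2"])
    fix p assume p: "p \<in> unit_ioc"
    show "\<bar>\<Phi> p * \<Psi> p\<bar> \<le> M1*M2" unfolding abs_mult using M1 M2 p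
      by (intro mult_mono) auto
    show "continuous (at_left p) (\<lambda>p. \<Phi> p * \<Psi> p)"
      using QbD(4)[OF assms(1) p] QbD(4)[OF assms(2) p] by (intro continuous_intros)
  next
    fix x y assume "x \<in> unit_ioc" "y \<in> unit_ioc" "x \<le> y"
    then show "\<Phi> x * \<Psi> x \<le> \<Phi> y * \<Psi> y"
      using QbD(3)[OF assms(1)] QbD(3)[OF assms(2)] assms
      by (intro mult_mono) auto
  qed (use QbD(1)[OF assms(1)] in auto)
qed

definition V :: "(real \<Rightarrow> real) set" where
  "V = {f. \<exists>\<Phi>\<in>Qb. \<exists>\<Psi>\<in>Qb. f = (\<lambda>p. \<Phi> p - \<Psi> p)}"

lemma V_I: "\<Phi> \<in> Qb \<Longrightarrow> \<Psi> \<in> Qb \<Longrightarrow> (\<lambda>p. \<Phi> p - \<Psi> p) \<in> V"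
  unfolding V_def by blast

lemma Qb_V: "\<Phi> \<in> Qb \<Longrightarrow> \<Phi> \<in> V"
  using V_I[of \<Phi> "K 0"] K_Qb[of 0] by (simp add: K0)

lemma V_add: "f \<in> V \<Longrightarrow> g \<in> V \<Longrightarrow> (\<lambda>p. f p + g p) \<in> V"
proof -
  assume "f \<in> V" "g \<in> V"
  then obtain a b c d where "a \<in> Qb" "b \<in> Qb" "c \<in> Qb" "d \<in> Qb"
    "f = (\<lambda>p. a p - b p)" "g = (\<lambda>p. c p - d p)" unfolding V_def by blast
  then show ?thesis using V_I[OF Qb_add[of a c] Qb_add[of b d]] by (simp add: algebra_simps)
qed

lemma V_scale: "f \<in> V \<Longrightarrow> (\<lambda>p. c * f p) \<in> V"
proof -
  assume "f \<in> V"
  then obtain a b where ab: "a \<in> Qb" "b \<in> Qb" "f = (\<lambda>p. a p - b p)" unfolding V_def by blast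
  show ?thesis
  proof (cases "c \<ge> 0")
    case True
    then show ?thesis using V_I[OF Qb_scale[of a c] Qb_scale[of b c]] ab by (simp add: algebra_simps)
  next
    case False
    then show ?thesis using V_I[OF Qb_scale[of b "-c"] Qb_scale[of a "-c"]] ab by (simp add: algebra_simps)
  qed
qed

lemma V_diff: "f \<in> V \<Longrightarrow> g \<in> V \<Longrightarrow> (\<lambda>p. f p - g p) \<in> V"
proof -
  assume f: "f \<in> V" and g: "g \<in> V"
  have "(\<lambda>p. f p + (-1) * g p) \<in> V" by (rule V_add[OF f V_scale[OF g]])
  then show ?thesis by simp
qed

lemma V_zero: "(\<lambda>p. 0) \<in> V" using Qb_V[OF K_Qb[of 0]] unfolding K0 .

lemma V_nonneg:
  assumes "f \<in> V"
  shows "\<exists>\<Phi>\<in>Qb. \<exists>\<Psi>\<in>Qb. (\<forall>p\<in>unit_ioc. \<Phi> p \<ge> 0 \<and> \<Psi> p \<ge> 0) \<and> f = (\<lambda>p. \<Phi> p - \<Psi> p)"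
proof -
  obtain a b where ab: "a \<in> Qb" "b \<in> Qb" "f = (\<lambda>p. a p - b p)" using assms unfolding V_def by blast
  obtain M1 where M1: "\<forall>p\<in>unit_ioc. \<bar>a p\<bar> \<le> M1" using QbD(2)[OF ab(1)] by blast
  obtain M2 where M2: "\<forall>p\<in>unit_ioc. \<bar>b p\<bar> \<le> M2" using QbD(2)[OF ab(2)] by blast
  define m where "m = \<bar>M1\<bar> + \<bar>M2\<bar>"
  define A where "A = (\<lambda>p. a p + K m p)"
  define B where "B = (\<lambda>p. b p + K m p)"
  have AB: "A \<in> Qb" "B \<in> Qb" unfolding A_def B_def
    by (rule Qb_add[OF ab(1) K_Qb], rule Qb_add[OF ab(2) K_Qb])
  have pos: "\<forall>p\<in>unit_ioc. A p \<ge> 0 \<and> B p \<ge> 0"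
  proof
    fix p assume p: "p \<in> unit_ioc"
    then have h: "\<bar>a p\<bar> \<le> M1" "\<bar>b p\<bar> \<le> M2" using M1 M2 by auto
    have k: "K m p = m" using p by (simp add: K_def)
    have "- a p \<le> \<bar>a p\<bar>" "- b p \<le> \<bar>b p\<bar>" "M1 \<le> \<bar>M1\<bar>" "M2 \<le> \<bar>M2\<bar>" "0 \<le> \<bar>M1\<bar>" "0 \<le> \<bar>M2\<bar>" by auto
    then show "A p \<ge> 0 \<and> B p \<ge> 0" unfolding A_def B_def k using h m_def by linarith
  qed
  have "f = (\<lambda>p. A p - B p)" unfolding ab(3) A_def B_def by simp
  with AB pos show ?thesis by blast
qed

lemma V_mult: "f \<in> V \<Longrightarrow> g \<in> V \<Longrightarrow> (\<lambda>p. f p * g p) \<in> V"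
proof -
  assume f: "f \<in> V" and g: "g \<in> V"
  obtain a b where q1: "a \<in> Qb" "b \<in> Qb"
    and n1: "\<forall>p\<in>unit_ioc. a p \<ge> 0 \<and> b p \<ge> 0"
    and e1: "f = (\<lambda>p. a p - b p)" using V_nonneg[OF f] by blast
  obtain c d where q2: "c \<in> Qb" "d \<in> Qb"
    and n2: "\<forall>p\<in>unit_ioc. c p \<ge> 0 \<and> d p \<ge> 0"
    and e2: "g = (\<lambda>p. c p - d p)" using V_nonneg[OF g] by blast
  note q = q1 q2 and n = n1 n2 and e = e1 e2
  have "(\<lambda>p. a p * c p) \<in> Qb" "(\<lambda>p. b p * d p) \<in> Qb" "(\<lambda>p. a p * d p) \<in> Qb" "(\<lambda>p. b p * c p) \<in> Qb"
    using q n by (auto intro!: Qb_mult)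
  then have "(\<lambda>p. (a p * c p + b p * d p) - (a p * d p + b p * c p)) \<in> V"
    by (intro V_I Qb_add)
  then show ?thesis using e by (simp add: algebra_simps)
qed

lemma ind_Qb: "0 \<le> a \<Longrightarrow> indicator {a<..1} \<in> Qb"
proof (rule QbI[where M=1])
  assume a: "0 \<le> a"
  fix p assume p: "p \<in> unit_ioc"
  show "continuous (at_left p) (indicator {a<..1} :: real \<Rightarrow> real)"
  proof (cases "p \<le> a")
    case True
    have "eventually (\<lambda>x. x \<in> {0<..<p}) (at_left p)" using p by (intro eventually_at_left_real) (auto simp: unit_ioc_def)
    then have "eventually (\<lambda>x. indicator {a<..1} x = (indicator {a<..1} p :: real)) (at_left p)"
      by eventually_elim (use True in \<open>auto simp: indicator_def\<close>)
    then show ?thesis by (rule left_cont_ev)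
  next
    case False
    have "eventually (\<lambda>x. x \<in> {a<..<p}) (at_left p)" using False by (intro eventually_at_left_real) auto
    then have "eventually (\<lambda>x. indicator {a<..1} x = (indicator {a<..1} p :: real)) (at_left p)"
      by eventually_elim (use False p in \<open>auto simp: indicator_def unit_ioc_def\<close>)
    then show ?thesis by (rule left_cont_ev)
  qed
qed (auto simp: indicator_def unit_ioc_def)

definition Mset :: "real set set" where
  "Mset = {A. A \<subseteq> unit_ioc \<and> indicator A \<in> V}"

lemma Mset_algebra: "algebra unit_ioc Mset"
  unfolding algebra_iff_Un
proof (intro conjI ballI)
  show "Mset \<subseteq> Pow unit_ioc" unfolding Mset_def by auto
  have "indicator {} = (\<lambda>p::real. 0::real)" by (auto simp: indicator_def)
  then show "{} \<in> Mset" unfolding Mset_def using V_zero by auto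
next
  fix A assume "A \<in> Mset"
  then have A: "A \<subseteq> unit_ioc" "indicator A \<in> V" unfolding Mset_def by auto
  have "indicator unit_ioc = (indicator {0<..1} :: real \<Rightarrow> real)" by (simp add: unit_ioc_def)
  then have "indicator unit_ioc \<in> V" using Qb_V[OF ind_Qb[of 0]] by simp
  then have "(\<lambda>p. indicator unit_ioc p - indicator A p) \<in> V" using A by (intro V_diff)
  moreover have "(\<lambda>p. indicator unit_ioc p - indicator A p) = (indicator (unit_ioc - A) :: real \<Rightarrow> real)"
    using A by (intro ext) (auto simp: indicator_def)
  ultimately show "unit_ioc - A \<in> Mset" unfolding Mset_def by auto
next
  fix A B assume "A \<in> Mset" "B \<in> Mset"
  then have A: "A \<subseteq> unit_ioc" "indicator A \<in> V" "B \<subseteq> unit_ioc" "indicator B \<in> V" unfolding Mset_def by auto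
  have "(\<lambda>p. indicator A p + indicator B p - indicator A p * indicator B p) \<in> V"
    using A by (intro V_diff V_add V_mult)
  then have "indicator (A \<union> B) \<in> V" by (simp add: indicator_union_arith[abs_def])
  then show "A \<union> B \<in> Mset" using A unfolding Mset_def by auto
qed

lemma Sigma_Mset: "Sigma_alg \<subseteq> Mset"
proof -
  have "{{a<..b} | a b. 0 < a \<and> a < b \<and> b \<le> 1} \<subseteq> Mset"
  proof safe
    fix a b :: real assume ab: "0 < a" "a < b" "b \<le> 1"
    have "(\<lambda>p. indicator {a<..1} p - indicator {b<..1} p) \<in> V"
      using ab by (intro V_diff Qb_V ind_Qb) auto
    moreover have "(\<lambda>p. indicator {a<..1} p - indicator {b<..1} p) = (indicator {a<..b} :: real \<Rightarrow> real)"
      using ab by (intro ext) (auto simp: indicator_def)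
    ultimately show "{a<..b} \<in> Mset" using ab unfolding Mset_def unit_ioc_def by auto
  qed
  then show ?thesis unfolding Sigma_alg_def using Mset_algebra by blast
qed


lemma simple_V: "simple_fun s \<Longrightarrow> s \<in> V"
proof -
  assume "simple_fun s"
  then obtain n :: nat and \<alpha> :: "nat \<Rightarrow> real" and A :: "nat \<Rightarrow> real set" where A: "\<forall>i<n. A i \<in> Sigma_alg" and s: "s = (\<lambda>p. \<Sum>i<n. \<alpha> i * indicator (A i) p)"
    unfolding simple_fun_def by blast
  have "\<forall>i<n. indicator (A i) \<in> V" using A Sigma_Mset unfolding Mset_def by auto
  then have "(\<lambda>p. \<Sum>i<m. \<alpha> i * indicator (A i) p) \<in> V" if "m \<le> n" for m
    using that
  proof (induction m)
    case 0 then show ?case using V_zero by simp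
  next
    case (Suc m)
    then show ?case by (simp, intro V_add V_scale) auto
  qed
  then show ?thesis using s by simp
qed

lemma B_dense: "F \<in> Bspace \<Longrightarrow> e > 0 \<Longrightarrow> \<exists>v\<in>V. \<forall>p\<in>unit_ioc. \<bar>F p - v p\<bar> \<le> e"
proof -
  assume F: "F \<in> Bspace" and e: "e > 0"
  then have "\<forall>\<epsilon>>0. \<exists>s. simple_fun s \<and> (\<forall>p\<in>unit_ioc. \<bar>F p - s p\<bar> < \<epsilon>)" unfolding Bspace_def by blast
  then obtain s where s: "simple_fun s" "\<forall>p\<in>unit_ioc. \<bar>F p - s p\<bar> < e" using e by blast
  have "\<forall>p\<in>unit_ioc. \<bar>F p - s p\<bar> \<le> e" using s(2) by (simp add: less_imp_le)
  then show ?thesis using simple_V[OF s(1)] by blast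
qed



definition mix :: "real \<Rightarrow> (real \<Rightarrow> real) \<Rightarrow> (real \<Rightarrow> real) \<Rightarrow> real \<Rightarrow> real" where
  "mix a \<Phi> \<Psi> = (\<lambda>p. a * \<Phi> p + (1 - a) * \<Psi> p)"

lemma mix_Qb: "\<Phi> \<in> Qb \<Longrightarrow> \<Psi> \<in> Qb \<Longrightarrow> 0 \<le> a \<Longrightarrow> a \<le> 1 \<Longrightarrow> mix a \<Phi> \<Psi> \<in> Qb"
  unfolding mix_def by (rule Qb_mix)

lemma zero_Qb: "(\<lambda>p. 0) \<in> Qb" using K_Qb[of 0] unfolding K0 .

lemma SN_bound_lt: "(\<And>p. p \<in> unit_ioc \<Longrightarrow> \<bar>f p\<bar> \<le> e) \<Longrightarrow> e < \<epsilon> \<Longrightarrow> sup_norm f < \<epsilon>"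
  using SN1[of f e] by force

lemma zero_by_eps: "(\<And>\<epsilon>. \<epsilon> > 0 \<Longrightarrow> \<bar>x::real\<bar> \<le> \<epsilon>) \<Longrightarrow> x = 0"
proof (rule ccontr)
  assume h: "\<And>\<epsilon>. \<epsilon> > 0 \<Longrightarrow> \<bar>x\<bar> \<le> \<epsilon>" and "x \<noteq> 0"
  then have "\<bar>x\<bar> \<le> \<bar>x\<bar>/2" using h[of "\<bar>x\<bar>/2"] by simp
  with \<open>x \<noteq> 0\<close> show False by simp
qed

lemma tri2: "\<bar>a - b\<bar> \<le> x \<Longrightarrow> \<bar>c - d\<bar> \<le> y \<Longrightarrow> \<bar>(a + c) - (b + d)\<bar> \<le> x + (y::real)"
  unfolding abs_le_iff by linarith

lemma tri3: "\<bar>a - b\<bar> \<le> x \<Longrightarrow> \<bar>c - d\<bar> \<le> y \<Longrightarrow> \<bar>a - c\<bar> \<le> e \<Longrightarrow> \<bar>b - d\<bar> \<le> e + x + (y::real)"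
  unfolding abs_le_iff by linarith

locale pref =
  fixes R :: "(real \<Rightarrow> real) \<Rightarrow> (real \<Rightarrow> real) \<Rightarrow> bool"
  assumes tp: "total_preorder_on Qb R" and cp: "continuous_pref R"
    and mono_ax: "monotonic_pref R" and di: "dual_independence R"
    and nd: "\<exists>\<Phi>\<in>Qb. \<exists>\<Psi>\<in>Qb. strict_part R \<Phi> \<Psi>"
begin

lemma trans: "x \<in> Qb \<Longrightarrow> y \<in> Qb \<Longrightarrow> z \<in> Qb \<Longrightarrow> R x y \<Longrightarrow> R y z \<Longrightarrow> R x z"
  using tp unfolding total_preorder_on_def by blast

lemma total: "x \<in> Qb \<Longrightarrow> y \<in> Qb \<Longrightarrow> R x y \<or> R y x"
  using tp unfolding total_preorder_on_def by blast

lemma PR_trans: "x \<in> Qb \<Longrightarrow> y \<in> Qb \<Longrightarrow> z \<in> Qb \<Longrightarrow> strict_part R x y \<Longrightarrow> R y z \<Longrightarrow> strict_part R x z"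
  unfolding strict_part_def by (meson trans)

lemma RP_trans: "x \<in> Qb \<Longrightarrow> y \<in> Qb \<Longrightarrow> z \<in> Qb \<Longrightarrow> R x y \<Longrightarrow> strict_part R y z \<Longrightarrow> strict_part R x z"
  unfolding strict_part_def by (meson trans)

lemma monoR: "\<Phi> \<in> Qb \<Longrightarrow> \<Psi> \<in> Qb \<Longrightarrow> (\<And>p. p \<in> unit_ioc \<Longrightarrow> \<Psi> p \<le> \<Phi> p) \<Longrightarrow> R \<Phi> \<Psi>"
  using mono_ax unfolding monotonic_pref_def by blast

lemma indP: "\<Phi> \<in> Qb \<Longrightarrow> \<Psi> \<in> Qb \<Longrightarrow> \<Upsilon> \<in> Qb \<Longrightarrow> 0 < \<alpha> \<Longrightarrow> \<alpha> < 1 \<Longrightarrow> strict_part R \<Phi> \<Psi>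
  \<Longrightarrow> strict_part R (mix \<alpha> \<Phi> \<Upsilon>) (mix \<alpha> \<Psi> \<Upsilon>)"
  using di unfolding dual_independence_def mix_def by blast

lemma closed1:
  assumes "\<Phi> \<in> Qb" "\<Psi> \<in> Qb" "\<And>\<epsilon>. \<epsilon> > 0 \<Longrightarrow> \<exists>\<Psi>'. \<Psi>' \<in> Qb \<and> R \<Psi>' \<Phi> \<and> sup_norm (\<lambda>p. \<Psi>' p - \<Psi> p) < \<epsilon>"
  shows "R \<Psi> \<Phi>"
proof -
  have "uclosed_in_Qb {\<Psi>\<in>Qb. R \<Psi> \<Phi>}" using cp assms(1) unfolding continuous_pref_def by blast
  then have "\<Psi> \<in> {\<Psi>\<in>Qb. R \<Psi> \<Phi>}" unfolding uclosed_in_Qb_def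
  proof (rule bspec[OF _ assms(2), THEN mp])
    show "\<forall>\<epsilon>>0. \<exists>\<Psi>'\<in>{\<Psi> \<in> Qb. R \<Psi> \<Phi>}. sup_norm (\<lambda>p. \<Psi>' p - \<Psi> p) < \<epsilon>"
      using assms(3) by blast
  qed
  then show ?thesis by blast
qed

lemma closed2:
  assumes "\<Phi> \<in> Qb" "\<Psi> \<in> Qb" "\<And>\<epsilon>. \<epsilon> > 0 \<Longrightarrow> \<exists>\<Psi>'. \<Psi>' \<in> Qb \<and> R \<Phi> \<Psi>' \<and> sup_norm (\<lambda>p. \<Psi>' p - \<Psi> p) < \<epsilon>"
  shows "R \<Phi> \<Psi>"
proof -
  have "uclosed_in_Qb {\<Psi>\<in>Qb. R \<Phi> \<Psi>}" using cp assms(1) unfolding continuous_pref_def by blast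
  then have "\<Psi> \<in> {\<Psi>\<in>Qb. R \<Phi> \<Psi>}" unfolding uclosed_in_Qb_def
  proof (rule bspec[OF _ assms(2), THEN mp])
    show "\<forall>\<epsilon>>0. \<exists>\<Psi>'\<in>{\<Psi> \<in> Qb. R \<Phi> \<Psi>}. sup_norm (\<lambda>p. \<Psi>' p - \<Psi> p) < \<epsilon>"
      using assms(3) by blast
  qed
  then show ?thesis by blast
qed

lemma K_strict:
  assumes "d < c" shows "strict_part R (K c) (K d)"
proof -
  obtain \<Phi> \<Psi> where \<Phi>\<Psi>: "\<Phi> \<in> Qb" "\<Psi> \<in> Qb" "strict_part R \<Phi> \<Psi>" using nd by blast
  obtain M1 where M1: "\<forall>p\<in>unit_ioc. \<bar>\<Phi> p\<bar> \<le> M1" using QbD(2)[OF \<Phi>\<Psi>(1)] by blast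
  obtain M2 where M2: "\<forall>p\<in>unit_ioc. \<bar>\<Psi> p\<bar> \<le> M2" using QbD(2)[OF \<Phi>\<Psi>(2)] by blast
  define M where "M = \<bar>M1\<bar> + \<bar>M2\<bar> + \<bar>c - d\<bar> + 1"
  have Mpos: "M > 0" and Mc: "c - d < 2 * M" unfolding M_def using assms by auto
  have r1: "R (K M) \<Phi>"
  proof (rule monoR[OF K_Qb \<Phi>\<Psi>(1)])
    fix p assume p: "p \<in> unit_ioc"
    have "\<Phi> p \<le> \<bar>\<Phi> p\<bar>" "\<bar>\<Phi> p\<bar> \<le> M1" "M1 \<le> \<bar>M1\<bar>" "0 \<le> \<bar>M2\<bar>" "0 \<le> \<bar>c - d\<bar>" using M1 p by auto
    then show "\<Phi> p \<le> K M p" using p unfolding K_def M_def by simp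
  qed
  have r2: "R \<Psi> (K (-M))"
  proof (rule monoR[OF \<Phi>\<Psi>(2) K_Qb])
    fix p assume p: "p \<in> unit_ioc"
    have "- \<Psi> p \<le> \<bar>\<Psi> p\<bar>" "\<bar>\<Psi> p\<bar> \<le> M2" "M2 \<le> \<bar>M2\<bar>" "0 \<le> \<bar>M1\<bar>" "0 \<le> \<bar>c - d\<bar>" using M2 p by auto
    then show "K (-M) p \<le> \<Psi> p" using p unfolding K_def M_def by simp
  qed
  have sM: "strict_part R (K M) (K (-M))"
    by (rule RP_trans[OF K_Qb \<Phi>\<Psi>(1) K_Qb r1 PR_trans[OF \<Phi>\<Psi>(1) \<Phi>\<Psi>(2) K_Qb \<Phi>\<Psi>(3) r2]])
  define \<alpha> where "\<alpha> = (c - d) / (2 * M)"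
  have a0: "0 < \<alpha>" and a1: "\<alpha> < 1" unfolding \<alpha>_def using Mpos Mc assms by (auto simp: field_simps)
  define x where "x = (c + d) / (2 * (1 - \<alpha>))"
  have e1: "\<alpha> * M = (c - d) / 2" unfolding \<alpha>_def using Mpos by (simp add: field_simps)
  have e2: "(1 - \<alpha>) * x = (c + d) / 2" unfolding x_def using a1 by (simp add: field_simps)
  have s: "strict_part R (mix \<alpha> (K M) (K x)) (mix \<alpha> (K (-M)) (K x))"
    by (rule indP[OF K_Qb K_Qb K_Qb a0 a1 sM])
  have "mix \<alpha> (K M) (K x) = K c"
  proof
    fix p show "mix \<alpha> (K M) (K x) p = K c p"
      unfolding mix_def K_def using e1 e2 by (auto simp: algebra_simps)
  qed
  moreover have "mix \<alpha> (K (-M)) (K x) = K d"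
  proof
    fix p show "mix \<alpha> (K (-M)) (K x) p = K d p"
      unfolding mix_def K_def using e1 e2 by (auto simp: algebra_simps)
  qed
  ultimately show ?thesis using s by simp
qed

lemma SN_K: "sup_norm (\<lambda>p. K a p - K b p) \<le> \<bar>a - b\<bar>"
  by (rule SN1) (auto simp: K_def)

lemma CE: assumes "\<Phi> \<in> Qb" shows "\<exists>c. R \<Phi> (K c) \<and> R (K c) \<Phi>"
proof -
  obtain M0 where M0: "\<forall>p\<in>unit_ioc. \<bar>\<Phi> p\<bar> \<le> M0" using QbD(2)[OF assms] by blast
  define M where "M = \<bar>M0\<bar>"
  have bnd: "\<Phi> p \<le> M" "- M \<le> \<Phi> p" if "p \<in> unit_ioc" for p
    using M0 that unfolding M_def by (auto simp: abs_le_iff)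
  define S where "S = {t. - M \<le> t \<and> t \<le> M \<and> R (K t) \<Phi>}"
  have MS: "M \<in> S" unfolding S_def using monoR[OF K_Qb assms, of M] bnd by (auto simp: K_def M_def)
  have bdd: "bdd_below S" unfolding S_def by (rule bdd_belowI[where m="-M"]) auto
  have Sne: "S \<noteq> {}" using MS by blast
  define c where "c = Inf S"
  have cl: "- M \<le> c" unfolding c_def using Sne by (intro cInf_greatest) (auto simp: S_def)
  have cu: "c \<le> M" unfolding c_def using MS bdd by (rule cInf_lower)
  have A: "R (K c) \<Phi>"
  proof (rule closed1[OF assms K_Qb])
    fix \<epsilon> :: real assume e: "\<epsilon> > 0"
    have "Inf S < c + \<epsilon>" using e unfolding c_def by simp
    then obtain t where t: "t \<in> S" "t < c + \<epsilon>" using cInf_less_iff[OF Sne bdd] by blast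
    have "c \<le> t" unfolding c_def using t(1) bdd by (rule cInf_lower)
    have "sup_norm (\<lambda>p. K t p - K c p) < \<epsilon>"
      using SN_K[of t c] \<open>c \<le> t\<close> t(2) by simp
    then show "\<exists>\<Psi>'. \<Psi>' \<in> Qb \<and> R \<Psi>' \<Phi> \<and> sup_norm (\<lambda>p. \<Psi>' p - K c p) < \<epsilon>"
      using t(1) K_Qb unfolding S_def by blast
  qed
  have B: "R \<Phi> (K c)"
  proof (cases "c = - M")
    case True
    then show ?thesis using monoR[OF assms K_Qb, of c] bnd by (auto simp: K_def)
  next
    case False
    then have cM: "- M < c" using cl by simp
    show ?thesis
    proof (rule closed2[OF assms K_Qb])
      fix \<epsilon> :: real assume e: "\<epsilon> > 0"
      define t where "t = max (- M) (c - \<epsilon>/2)"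
      have t0: "c - \<epsilon>/2 \<le> t" "- M \<le> t" "t < c" unfolding t_def using cM e by auto
      then have t1: "t < c" "- M \<le> t" "t \<le> M" "c - t \<le> \<epsilon>/2" using cu by linarith+
      have "t \<notin> S"
      proof
        assume "t \<in> S" then have "c \<le> t" unfolding c_def using bdd by (rule cInf_lower)
        with t1 show False by simp
      qed
      then have "\<not> R (K t) \<Phi>" unfolding S_def using t1 by auto
      then have "R \<Phi> (K t)" using total[OF assms K_Qb] by blast
      moreover have "sup_norm (\<lambda>p. K t p - K c p) < \<epsilon>"
        using SN_K[of t c] t1 e by simp
      ultimately show "\<exists>\<Psi>'. \<Psi>' \<in> Qb \<and> R \<Phi> \<Psi>' \<and> sup_norm (\<lambda>p. \<Psi>' p - K c p) < \<epsilon>"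
        using K_Qb by blast
    qed
  qed
  show ?thesis using A B by blast
qed

definition U :: "(real \<Rightarrow> real) \<Rightarrow> real" where
  "U \<Phi> = (SOME c. R \<Phi> (K c) \<and> R (K c) \<Phi>)"

lemma U: "\<Phi> \<in> Qb \<Longrightarrow> R \<Phi> (K (U \<Phi>)) \<and> R (K (U \<Phi>)) \<Phi>"
  unfolding U_def by (rule someI_ex[OF CE])

lemma rep: assumes "\<Phi> \<in> Qb" "\<Psi> \<in> Qb" shows "strict_part R \<Phi> \<Psi> \<longleftrightarrow> U \<Psi> < U \<Phi>"
proof (cases "U \<Psi> < U \<Phi>")
  case True
  have "strict_part R (K (U \<Phi>)) (K (U \<Psi>))" using K_strict[OF True] .
  then have "strict_part R \<Phi> (K (U \<Psi>))" using RP_trans[OF assms(1) K_Qb K_Qb] U[OF assms(1)] by blast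
  then have "strict_part R \<Phi> \<Psi>" using PR_trans[OF assms(1) K_Qb assms(2)] U[OF assms(2)] by blast
  then show ?thesis using True by simp
next
  case False
  then have "R (K (U \<Psi>)) (K (U \<Phi>))" by (intro monoR[OF K_Qb K_Qb]) (auto simp: K_def)
  then have "R \<Psi> \<Phi>" using U[OF assms(1)] U[OF assms(2)] trans[OF assms(2) K_Qb K_Qb] trans[OF assms(2) K_Qb assms(1)]
    by blast
  then show ?thesis using False unfolding strict_part_def by simp
qed

lemma R_U: "\<Phi> \<in> Qb \<Longrightarrow> \<Psi> \<in> Qb \<Longrightarrow> R \<Phi> \<Psi> \<Longrightarrow> U \<Psi> \<le> U \<Phi>"
  using rep[of \<Psi> \<Phi>] unfolding strict_part_def by force

lemma U_eq: "\<Phi> \<in> Qb \<Longrightarrow> \<Psi> \<in> Qb \<Longrightarrow> R \<Phi> \<Psi> \<Longrightarrow> R \<Psi> \<Phi> \<Longrightarrow> U \<Phi> = U \<Psi>"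
  using R_U[of \<Phi> \<Psi>] R_U[of \<Psi> \<Phi>] by simp

lemma U_K: "U (K c) = c"
proof -
  have "R (K c) (K (U (K c)))" "R (K (U (K c))) (K c)" using U[OF K_Qb] by auto
  then show ?thesis using U_eq[OF K_Qb K_Qb] R_U[OF K_Qb K_Qb]
    by (metis K_strict linorder_neq_iff strict_part_def)
qed

lemma U_le: "\<Phi> \<in> Qb \<Longrightarrow> \<Psi> \<in> Qb \<Longrightarrow> (\<And>p. p \<in> unit_ioc \<Longrightarrow> \<Psi> p \<le> \<Phi> p) \<Longrightarrow> U \<Psi> \<le> U \<Phi>"
  by (rule R_U) (auto intro: monoR)

lemma indiff:
  assumes \<Phi>: "\<Phi> \<in> Qb" and \<Upsilon>: "\<Upsilon> \<in> Qb" and a: "0 < \<alpha>" "\<alpha> < 1"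
    and c1: "R \<Phi> (K c)" and c2: "R (K c) \<Phi>"
  shows "R (mix \<alpha> \<Phi> \<Upsilon>) (mix \<alpha> (K c) \<Upsilon>) \<and> R (mix \<alpha> (K c) \<Upsilon>) (mix \<alpha> \<Phi> \<Upsilon>)"
proof
  have mQ: "mix \<alpha> \<Phi> \<Upsilon> \<in> Qb" "\<And>t. mix \<alpha> (K t) \<Upsilon> \<in> Qb" using a by (auto intro!: mix_Qb \<Phi> \<Upsilon> K_Qb)
  have dist: "sup_norm (\<lambda>p. mix \<alpha> (K t) \<Upsilon> p - mix \<alpha> (K c) \<Upsilon> p) \<le> \<alpha> * \<bar>t - c\<bar>" for t
  proof (rule SN1, intro ballI)
    fix p assume p: "p \<in> unit_ioc"
    have "mix \<alpha> (K t) \<Upsilon> p - mix \<alpha> (K c) \<Upsilon> p = \<alpha> * (t - c)" unfolding mix_def K_def using p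
      by (simp add: algebra_simps)
    then show "\<bar>mix \<alpha> (K t) \<Upsilon> p - mix \<alpha> (K c) \<Upsilon> p\<bar> \<le> \<alpha> * \<bar>t - c\<bar>" using a by (simp add: abs_mult)
  qed
  show "R (mix \<alpha> (K c) \<Upsilon>) (mix \<alpha> \<Phi> \<Upsilon>)"
  proof (rule closed1[OF mQ(1) mQ(2)])
    fix \<epsilon> :: real assume e: "\<epsilon> > 0"
    define \<delta> where "\<delta> = \<epsilon> / (2 * \<alpha>)"
    have d: "\<delta> > 0" "\<alpha> * \<delta> < \<epsilon>" unfolding \<delta>_def using a e by (auto simp: field_simps)
    have "strict_part R (K (c + \<delta>)) \<Phi>" using PR_trans[OF K_Qb K_Qb \<Phi> K_strict c2] d by simp
    then have "strict_part R (mix \<alpha> (K (c + \<delta>)) \<Upsilon>) (mix \<alpha> \<Phi> \<Upsilon>)" by (rule indP[OF K_Qb \<Phi> \<Upsilon> a])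
    moreover have "sup_norm (\<lambda>p. mix \<alpha> (K (c+\<delta>)) \<Upsilon> p - mix \<alpha> (K c) \<Upsilon> p) < \<epsilon>"
      using dist[of "c+\<delta>"] d by simp
    ultimately show "\<exists>\<Psi>'. \<Psi>' \<in> Qb \<and> R \<Psi>' (mix \<alpha> \<Phi> \<Upsilon>) \<and> sup_norm (\<lambda>p. \<Psi>' p - mix \<alpha> (K c) \<Upsilon> p) < \<epsilon>"
      using mQ unfolding strict_part_def by blast
  qed
  show "R (mix \<alpha> \<Phi> \<Upsilon>) (mix \<alpha> (K c) \<Upsilon>)"
  proof (rule closed2[OF mQ(1) mQ(2)])
    fix \<epsilon> :: real assume e: "\<epsilon> > 0"
    define \<delta> where "\<delta> = \<epsilon> / (2 * \<alpha>)"
    have d: "\<delta> > 0" "\<alpha> * \<delta> < \<epsilon>" unfolding \<delta>_def using a e by (auto simp: field_simps)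
    have "strict_part R \<Phi> (K (c - \<delta>))" using RP_trans[OF \<Phi> K_Qb K_Qb c1 K_strict] d by simp
    then have "strict_part R (mix \<alpha> \<Phi> \<Upsilon>) (mix \<alpha> (K (c - \<delta>)) \<Upsilon>)" by (rule indP[OF \<Phi> K_Qb \<Upsilon> a])
    moreover have "sup_norm (\<lambda>p. mix \<alpha> (K (c-\<delta>)) \<Upsilon> p - mix \<alpha> (K c) \<Upsilon> p) < \<epsilon>"
      using dist[of "c-\<delta>"] d by simp
    ultimately show "\<exists>\<Psi>'. \<Psi>' \<in> Qb \<and> R (mix \<alpha> \<Phi> \<Upsilon>) \<Psi>' \<and> sup_norm (\<lambda>p. \<Psi>' p - mix \<alpha> (K c) \<Upsilon> p) < \<epsilon>"
      using mQ unfolding strict_part_def by blast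
  qed
qed

lemma U_mix:
  assumes \<Phi>: "\<Phi> \<in> Qb" and \<Psi>: "\<Psi> \<in> Qb" and a: "0 < \<alpha>" "\<alpha> < 1"
  shows "U (mix \<alpha> \<Phi> \<Psi>) = \<alpha> * U \<Phi> + (1 - \<alpha>) * U \<Psi>"
proof -
  define a where "a = U \<Phi>"
  define b where "b = U \<Psi>"
  have a': "0 < 1 - \<alpha>" "1 - \<alpha> < 1" using a by auto
  have h1: "U (mix \<alpha> \<Phi> \<Psi>) = U (mix \<alpha> (K a) \<Psi>)"
    using indiff[OF \<Phi> \<Psi> a, of a] U[OF \<Phi>] a unfolding a_def
    by (intro U_eq mix_Qb \<Phi> \<Psi> K_Qb) auto
  have h2: "mix \<alpha> (K a) \<Psi> = mix (1 - \<alpha>) \<Psi> (K a)" unfolding mix_def by (auto simp: algebra_simps)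
  have h3: "U (mix (1 - \<alpha>) \<Psi> (K a)) = U (mix (1 - \<alpha>) (K b) (K a))"
    using indiff[OF \<Psi> K_Qb a', of b] U[OF \<Psi>] a unfolding b_def
    by (intro U_eq mix_Qb \<Psi> K_Qb) auto
  have h4: "mix (1 - \<alpha>) (K b) (K a) = K (\<alpha> * a + (1 - \<alpha>) * b)" unfolding mix_def K_def
    by (auto simp: algebra_simps)
  show ?thesis using h1 h2 h3 h4 U_K unfolding a_def b_def by simp
qed

lemma U_zero: "U (\<lambda>p. 0) = 0" using U_K[of 0] unfolding K0 .

lemma U_scale1: assumes \<Phi>: "\<Phi> \<in> Qb" and t: "0 \<le> t" "t \<le> 1" shows "U (\<lambda>p. t * \<Phi> p) = t * U \<Phi>"
proof -
  consider "t = 0" | "t = 1" | "0 < t" "t < 1" using t by linarith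
  then show ?thesis
  proof cases
    case 1 then show ?thesis using U_zero by simp
  next
    case 2 then show ?thesis by simp
  next
    case 3
    have "(\<lambda>p. t * \<Phi> p) = mix t \<Phi> (\<lambda>p. 0)" unfolding mix_def by simp
    then show ?thesis using U_mix[OF \<Phi> zero_Qb 3] U_zero by simp
  qed
qed

lemma U_scale: assumes \<Phi>: "\<Phi> \<in> Qb" and t: "0 \<le> t" shows "U (\<lambda>p. t * \<Phi> p) = t * U \<Phi>"
proof (cases "t \<le> 1")
  case True then show ?thesis using U_scale1[OF \<Phi> t] by simp
next
  case False
  define X where "X = (\<lambda>p. t * \<Phi> p)"
  have X: "X \<in> Qb" unfolding X_def using Qb_scale[OF \<Phi> t] .
  have "\<Phi> = (\<lambda>p. (1/t) * X p)" unfolding X_def using False by auto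
  then have "U \<Phi> = (1/t) * U X" using U_scale1[OF X, of "1/t"] False by simp
  then show ?thesis unfolding X_def[symmetric] using False by (simp add: field_simps)
qed

lemma U_add: assumes "\<Phi> \<in> Qb" "\<Psi> \<in> Qb" shows "U (\<lambda>p. \<Phi> p + \<Psi> p) = U \<Phi> + U \<Psi>"
proof -
  have m: "mix (1/2) \<Phi> \<Psi> \<in> Qb" using assms by (intro mix_Qb) auto
  have "(\<lambda>p. \<Phi> p + \<Psi> p) = (\<lambda>p. 2 * mix (1/2) \<Phi> \<Psi> p)" unfolding mix_def by (auto simp: algebra_simps)
  then show ?thesis using U_scale[OF m, of 2] U_mix[OF assms, of "1/2"] by simp
qed

lemma U_lip:
  assumes "\<Phi> \<in> Qb" "\<Psi> \<in> Qb" "e \<ge> 0" "\<And>p. p \<in> unit_ioc \<Longrightarrow> \<Phi> p \<le> \<Psi> p + e"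
  shows "U \<Phi> \<le> U \<Psi> + e"
proof -
  have Q: "(\<lambda>p. \<Psi> p + K e p) \<in> Qb" by (rule Qb_add[OF assms(2) K_Qb])
  have "U \<Phi> \<le> U (\<lambda>p. \<Psi> p + K e p)" using assms(4) by (intro U_le[OF Q assms(1)]) (auto simp: K_def)
  also have "\<dots> = U \<Psi> + e" using U_add[OF assms(2) K_Qb] U_K by simp
  finally show ?thesis .
qed

definition L0 :: "(real \<Rightarrow> real) \<Rightarrow> real" where
  "L0 f = (SOME y. \<exists>\<Phi>\<in>Qb. \<exists>\<Psi>\<in>Qb. f = (\<lambda>p. \<Phi> p - \<Psi> p) \<and> y = U \<Phi> - U \<Psi>)"

lemma U_diff_eq:
  assumes "\<Phi> \<in> Qb" "\<Psi> \<in> Qb" "\<Phi>' \<in> Qb" "\<Psi>' \<in> Qb" "(\<lambda>p. \<Phi> p - \<Psi> p) = (\<lambda>p. \<Phi>' p - \<Psi>' p)"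
  shows "U \<Phi> - U \<Psi> = U \<Phi>' - U \<Psi>'"
proof -
  have "\<And>p. \<Phi> p - \<Psi> p = \<Phi>' p - \<Psi>' p" using fun_cong[OF assms(5)] by simp
  then have "(\<lambda>p. \<Phi> p + \<Psi>' p) = (\<lambda>p. \<Phi>' p + \<Psi> p)" by (intro ext) (metis add.commute diff_add_eq diff_eq_eq)
  then have "U \<Phi> + U \<Psi>' = U \<Phi>' + U \<Psi>" using U_add[OF assms(1,4)] U_add[OF assms(3,2)] by simp
  then show ?thesis by simp
qed

lemma L0_eq: assumes "\<Phi> \<in> Qb" "\<Psi> \<in> Qb" shows "L0 (\<lambda>p. \<Phi> p - \<Psi> p) = U \<Phi> - U \<Psi>"
proof -
  have ex: "\<exists>y. \<exists>\<Phi>'\<in>Qb. \<exists>\<Psi>'\<in>Qb. (\<lambda>p. \<Phi> p - \<Psi> p) = (\<lambda>p. \<Phi>' p - \<Psi>' p) \<and> y = U \<Phi>' - U \<Psi>'"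
    using assms by blast
  have "\<exists>\<Phi>'\<in>Qb. \<exists>\<Psi>'\<in>Qb. (\<lambda>p. \<Phi> p - \<Psi> p) = (\<lambda>p. \<Phi>' p - \<Psi>' p) \<and> L0 (\<lambda>p. \<Phi> p - \<Psi> p) = U \<Phi>' - U \<Psi>'"
    unfolding L0_def by (rule someI_ex[OF ex])
  then show ?thesis using U_diff_eq[OF assms] by metis
qed

lemma L0_Qb: "\<Phi> \<in> Qb \<Longrightarrow> L0 \<Phi> = U \<Phi>"
  using L0_eq[OF _ zero_Qb, of \<Phi>] U_zero by simp

lemma L0_lip:
  assumes "f \<in> V" "g \<in> V" "\<forall>p\<in>unit_ioc. \<bar>f p - g p\<bar> \<le> e"
  shows "\<bar>L0 f - L0 g\<bar> \<le> e"
proof -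
  obtain a b where ab: "a \<in> Qb" "b \<in> Qb" "f = (\<lambda>p. a p - b p)" using assms(1) unfolding V_def by blast
  obtain c d where cd: "c \<in> Qb" "d \<in> Qb" "g = (\<lambda>p. c p - d p)" using assms(2) unfolding V_def by blast
  have e0: "e \<ge> 0" using assms(3) one_in by force
  have X: "(\<lambda>p. a p + d p) \<in> Qb" "(\<lambda>p. b p + c p) \<in> Qb" using ab cd by (auto intro: Qb_add)
  have "\<bar>(a p + d p) - (b p + c p)\<bar> \<le> e" if "p \<in> unit_ioc" for p
    using assms(3) that unfolding ab(3) cd(3) by (simp add: algebra_simps)
  then have i1: "U (\<lambda>p. a p + d p) \<le> U (\<lambda>p. b p + c p) + e"
    and i2: "U (\<lambda>p. b p + c p) \<le> U (\<lambda>p. a p + d p) + e"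
    by (intro U_lip X e0; force simp: abs_le_iff)+
  have "L0 f = U a - U b" "L0 g = U c - U d" unfolding ab(3) cd(3) using L0_eq ab cd by auto
  then show ?thesis using i1 i2 U_add[OF ab(1) cd(2)] U_add[OF ab(2) cd(1)] by (simp add: abs_le_iff)
qed

lemma L0_add: assumes "f \<in> V" "g \<in> V" shows "L0 (\<lambda>p. f p + g p) = L0 f + L0 g"
proof -
  obtain a b where ab: "a \<in> Qb" "b \<in> Qb" "f = (\<lambda>p. a p - b p)" using assms(1) unfolding V_def by blast
  obtain c d where cd: "c \<in> Qb" "d \<in> Qb" "g = (\<lambda>p. c p - d p)" using assms(2) unfolding V_def by blast
  have "(\<lambda>p. f p + g p) = (\<lambda>p. (a p + c p) - (b p + d p))" unfolding ab(3) cd(3) by (auto simp: algebra_simps)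
  then have "L0 (\<lambda>p. f p + g p) = U (\<lambda>p. a p + c p) - U (\<lambda>p. b p + d p)"
    using L0_eq[OF Qb_add[OF ab(1) cd(1)] Qb_add[OF ab(2) cd(2)]] by simp
  moreover have "L0 f = U a - U b" "L0 g = U c - U d" unfolding ab(3) cd(3) using L0_eq ab cd by auto
  ultimately show ?thesis using U_add[OF ab(1) cd(1)] U_add[OF ab(2) cd(2)] by simp
qed

lemma L0_scale: assumes "f \<in> V" shows "L0 (\<lambda>p. c * f p) = c * L0 f"
proof -
  obtain a b where ab: "a \<in> Qb" "b \<in> Qb" "f = (\<lambda>p. a p - b p)" using assms(1) unfolding V_def by blast
  have Lf: "L0 f = U a - U b" unfolding ab(3) using L0_eq ab by auto
  show ?thesis
  proof (cases "c \<ge> 0")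
    case True
    have "(\<lambda>p. c * f p) = (\<lambda>p. c * a p - c * b p)" unfolding ab(3) by (auto simp: algebra_simps)
    then have "L0 (\<lambda>p. c * f p) = c * U a - c * U b" using L0_eq[OF Qb_scale[OF ab(1) True] Qb_scale[OF ab(2) True]]
        U_scale[OF ab(1) True] U_scale[OF ab(2) True] by simp
    then show ?thesis using Lf by (simp add: right_diff_distrib)
  next
    case False
    then have F: "-c \<ge> 0" by simp
    have "(\<lambda>p. c * f p) = (\<lambda>p. (-c) * b p - (-c) * a p)" unfolding ab(3) by (auto simp: algebra_simps)
    then have "L0 (\<lambda>p. c * f p) = (-c) * U b - (-c) * U a" using L0_eq[OF Qb_scale[OF ab(2) F] Qb_scale[OF ab(1) F]]
        U_scale[OF ab(1) F] U_scale[OF ab(2) F] by simp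
    then show ?thesis using Lf by (simp add: right_diff_distrib)
  qed
qed

definition L :: "(real \<Rightarrow> real) \<Rightarrow> real" where
  "L F = Sup {L0 v - e | v e. v \<in> V \<and> (\<forall>p\<in>unit_ioc. \<bar>F p - v p\<bar> \<le> e)}"

lemma L_approx:
  assumes v: "v \<in> V" and b: "\<forall>p\<in>unit_ioc. \<bar>F p - v p\<bar> \<le> e"
  shows "\<bar>L F - L0 v\<bar> \<le> e"
proof -
  define S where "S = {L0 v - e | v e. v \<in> V \<and> (\<forall>p\<in>unit_ioc. \<bar>F p - v p\<bar> \<le> e)}"
  have ub: "y \<le> L0 v + e" if yS: "y \<in> S" for y
  proof -
    obtain w e' where w: "y = L0 w - e'" "w \<in> V" "\<forall>p\<in>unit_ioc. \<bar>F p - w p\<bar> \<le> e'"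
      using yS unfolding S_def by blast
    have "\<forall>p\<in>unit_ioc. \<bar>w p - v p\<bar> \<le> e + e'"
    proof
      fix p assume "p \<in> unit_ioc"
      then have "\<bar>F p - w p\<bar> \<le> e'" "\<bar>F p - v p\<bar> \<le> e" using w b by auto
      then show "\<bar>w p - v p\<bar> \<le> e + e'" by (simp add: abs_le_iff)
    qed
    then have "\<bar>L0 w - L0 v\<bar> \<le> e + e'" by (rule L0_lip[OF w(2) v])
    then show ?thesis using w(1) by (simp add: abs_le_iff)
  qed
  have mem: "L0 v - e \<in> S" unfolding S_def using v b by blast
  have bdd: "bdd_above S" using ub by (rule bdd_aboveI)
  have "L0 v - e \<le> Sup S" using mem bdd by (rule cSup_upper)
  moreover have "Sup S \<le> L0 v + e" using mem ub by (intro cSup_least) auto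
  ultimately show ?thesis unfolding L_def S_def[symmetric] by (simp add: abs_le_iff)
qed

lemma L_Qb: "\<Phi> \<in> Qb \<Longrightarrow> L \<Phi> = U \<Phi>"
  using L_approx[OF Qb_V, of \<Phi> \<Phi> 0] L0_Qb by simp

lemma L_add: assumes F: "F \<in> Bspace" and G: "G \<in> Bspace" shows "L (\<lambda>p. F p + G p) = L F + L G"
proof -
  have "L (\<lambda>p. F p + G p) - L F - L G = 0"
  proof (rule zero_by_eps)
    fix \<epsilon> :: real assume e: "\<epsilon> > 0"
    obtain v where v: "v \<in> V" "\<forall>p\<in>unit_ioc. \<bar>F p - v p\<bar> \<le> \<epsilon>/4" using B_dense[OF F, of "\<epsilon>/4"] e by auto
    obtain w where w: "w \<in> V" "\<forall>p\<in>unit_ioc. \<bar>G p - w p\<bar> \<le> \<epsilon>/4" using B_dense[OF G, of "\<epsilon>/4"] e by auto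
    have "\<forall>p\<in>unit_ioc. \<bar>(F p + G p) - (v p + w p)\<bar> \<le> \<epsilon>/2"
    proof
      fix p assume "p \<in> unit_ioc"
      then have "\<bar>(F p + G p) - (v p + w p)\<bar> \<le> \<epsilon>/4 + \<epsilon>/4" using v(2) w(2) by (intro tri2) auto
      then show "\<bar>(F p + G p) - (v p + w p)\<bar> \<le> \<epsilon>/2" by simp
    qed
    then have h: "\<bar>L (\<lambda>p. F p + G p) - L0 (\<lambda>p. v p + w p)\<bar> \<le> \<epsilon>/2"
      by (intro L_approx V_add v w) auto
    have "\<bar>L F - L0 v\<bar> \<le> \<epsilon>/4" "\<bar>L G - L0 w\<bar> \<le> \<epsilon>/4"
      using L_approx[OF v(1) v(2)] L_approx[OF w(1) w(2)] by auto
    then show "\<bar>L (\<lambda>p. F p + G p) - L F - L G\<bar> \<le> \<epsilon>" using h L0_add[OF v(1) w(1)] unfolding abs_le_iff by linarith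
  qed
  then show ?thesis by simp
qed

lemma L_scale: assumes F: "F \<in> Bspace" shows "L (\<lambda>p. c * F p) = c * L F"
proof -
  have "L (\<lambda>p. c * F p) - c * L F = 0"
  proof (rule zero_by_eps)
    fix \<epsilon> :: real assume e: "\<epsilon> > 0"
    define \<eta> where "\<eta> = \<epsilon> / (2 * (\<bar>c\<bar> + 1))"
    have eta: "\<eta> > 0" "\<bar>c\<bar> * \<eta> \<le> \<epsilon> / 2" unfolding \<eta>_def using e by (auto simp: field_simps)
    obtain v where v: "v \<in> V" "\<forall>p\<in>unit_ioc. \<bar>F p - v p\<bar> \<le> \<eta>" using B_dense[OF F eta(1)] by auto
    have "\<forall>p\<in>unit_ioc. \<bar>c * F p - c * v p\<bar> \<le> \<bar>c\<bar> * \<eta>"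
    proof
      fix p assume "p \<in> unit_ioc"
      then have "\<bar>F p - v p\<bar> \<le> \<eta>" using v by auto
      then have "\<bar>c\<bar> * \<bar>F p - v p\<bar> \<le> \<bar>c\<bar> * \<eta>" by (rule mult_left_mono) simp
      then show "\<bar>c * F p - c * v p\<bar> \<le> \<bar>c\<bar> * \<eta>" by (simp add: abs_mult[symmetric] algebra_simps)
    qed
    then have h1: "\<bar>L (\<lambda>p. c * F p) - L0 (\<lambda>p. c * v p)\<bar> \<le> \<bar>c\<bar> * \<eta>"
      by (intro L_approx V_scale v)
    have "\<bar>L F - L0 v\<bar> \<le> \<eta>" using L_approx[OF v(1) v(2)] by auto
    then have "\<bar>c\<bar> * \<bar>L F - L0 v\<bar> \<le> \<bar>c\<bar> * \<eta>" by (rule mult_left_mono) simp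
    then have h2: "\<bar>c * L F - c * L0 v\<bar> \<le> \<bar>c\<bar> * \<eta>" by (simp add: abs_mult[symmetric] algebra_simps)
    show "\<bar>L (\<lambda>p. c * F p) - c * L F\<bar> \<le> \<epsilon>" using h1 h2 eta L0_scale[OF v(1), of c] unfolding abs_le_iff by linarith
  qed
  then show ?thesis by simp
qed

lemma L_lip:
  assumes F: "F \<in> Bspace" and G: "G \<in> Bspace" and d: "\<forall>p\<in>unit_ioc. \<bar>F p - G p\<bar> \<le> d"
  shows "\<bar>L F - L G\<bar> \<le> d"
proof (rule field_le_epsilon)
  fix \<epsilon> :: real assume e: "\<epsilon> > 0"
  obtain v where v: "v \<in> V" "\<forall>p\<in>unit_ioc. \<bar>F p - v p\<bar> \<le> \<epsilon>/4" using B_dense[OF F, of "\<epsilon>/4"] e by auto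
  obtain w where w: "w \<in> V" "\<forall>p\<in>unit_ioc. \<bar>G p - w p\<bar> \<le> \<epsilon>/4" using B_dense[OF G, of "\<epsilon>/4"] e by auto
  have "\<forall>p\<in>unit_ioc. \<bar>v p - w p\<bar> \<le> d + \<epsilon>/2"
  proof
    fix p assume "p \<in> unit_ioc"
    then have "\<bar>v p - w p\<bar> \<le> d + \<epsilon>/4 + \<epsilon>/4" using v(2) w(2) d by (intro tri3) auto
    then show "\<bar>v p - w p\<bar> \<le> d + \<epsilon>/2" by simp
  qed
  then have h: "\<bar>L0 v - L0 w\<bar> \<le> d + \<epsilon>/2" by (rule L0_lip[OF v(1) w(1)])
  have "\<bar>L F - L0 v\<bar> \<le> \<epsilon>/4" "\<bar>L G - L0 w\<bar> \<le> \<epsilon>/4"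
      using L_approx[OF v(1) v(2)] L_approx[OF w(1) w(2)] by auto
  then show "\<bar>L F - L G\<bar> \<le> d + \<epsilon>" using h unfolding abs_le_iff by linarith
qed

end

theorem mainTheorem9:
  fixes R :: "(real \<Rightarrow> real) \<Rightarrow> (real \<Rightarrow> real) \<Rightarrow> bool"
  assumes "total_preorder_on Qb R"
    and "continuous_pref R"
    and "monotonic_pref R"
    and "dual_independence R"
  shows "\<exists>L. continuous_linear_functional_on_B L \<and> numerical_representation R L"
proof (cases "\<exists>\<Phi>\<in>Qb. \<exists>\<Psi>\<in>Qb. strict_part R \<Phi> \<Psi>")
  case True
  interpret pref R by (rule pref.intro[OF assms True])
  have clf: "continuous_linear_functional_on_B L"
    unfolding continuous_linear_functional_on_B_def
  proof (intro conjI ballI allI impI)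
    fix \<Phi> \<Psi> assume "\<Phi> \<in> Bspace" "\<Psi> \<in> Bspace"
    then show "L (\<lambda>p. \<Phi> p + \<Psi> p) = L \<Phi> + L \<Psi>" by (rule L_add)
  next
    fix \<Phi> and c :: real assume "\<Phi> \<in> Bspace"
    then show "L (\<lambda>p. c * \<Phi> p) = c * L \<Phi>" by (rule L_scale)
  next
    fix \<Phi> and \<epsilon> :: real assume \<Phi>: "\<Phi> \<in> Bspace" and e: "\<epsilon> > 0"
    show "\<exists>\<delta>>0. \<forall>\<Psi>\<in>Bspace. sup_norm (\<lambda>p. \<Psi> p - \<Phi> p) < \<delta> \<longrightarrow> \<bar>L \<Psi> - L \<Phi>\<bar> < \<epsilon>"
    proof (intro exI[of _ \<epsilon>] conjI ballI impI)
      fix \<Psi> assume \<Psi>: "\<Psi> \<in> Bspace" and s: "sup_norm (\<lambda>p. \<Psi> p - \<Phi> p) < \<epsilon>"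
      obtain M1 where M1: "\<forall>p\<in>unit_ioc. \<bar>\<Psi> p\<bar> \<le> M1" using \<Psi> unfolding Bspace_def by blast
      obtain M2 where M2: "\<forall>p\<in>unit_ioc. \<bar>\<Phi> p\<bar> \<le> M2" using \<Phi> unfolding Bspace_def by blast
      have bd: "\<forall>p\<in>unit_ioc. \<bar>\<Psi> p - \<Phi> p\<bar> \<le> M1 + M2"
      proof
        fix p assume p: "p \<in> unit_ioc"
        show "\<bar>\<Psi> p - \<Phi> p\<bar> \<le> M1 + M2"
          using abs_triangle_ineq4[of "\<Psi> p" "\<Phi> p"] M1 M2 p by fastforce
      qed
      have "\<forall>p\<in>unit_ioc. \<bar>\<Psi> p - \<Phi> p\<bar> \<le> sup_norm (\<lambda>p. \<Psi> p - \<Phi> p)"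
      proof
        fix p assume p: "p \<in> unit_ioc"
        show "\<bar>\<Psi> p - \<Phi> p\<bar> \<le> sup_norm (\<lambda>p. \<Psi> p - \<Phi> p)"
          using SN2[of "\<lambda>p. \<Psi> p - \<Phi> p" "M1 + M2" p] bd p by simp
      qed
      then have "\<bar>L \<Psi> - L \<Phi>\<bar> \<le> sup_norm (\<lambda>p. \<Psi> p - \<Phi> p)" by (rule L_lip[OF \<Psi> \<Phi>])
      with s show "\<bar>L \<Psi> - L \<Phi>\<bar> < \<epsilon>" by simp
    qed (rule e)
  qed
  have "numerical_representation R L" unfolding numerical_representation_def using rep L_Qb by simp
  then show ?thesis using clf by blast
next
  case False
  have "continuous_linear_functional_on_B (\<lambda>_. 0)" unfolding continuous_linear_functional_on_B_def by auto
  moreover have "numerical_representation R (\<lambda>_. 0)" unfolding numerical_representation_def using False by auto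
  ultimately show ?thesis by blast
qed

end
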